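(* For 3-Majority or 2-Choices, for every $t\ge1$ the following hold. (i) For every opinion $i$, conditioned on $\mathcal F_{t-1}$, the random variable $\alpha_t(i)-\mathbb E_{t-1}[\alpha_t(i)]$ satisfies the $(1/n,s)$-Bernstein condition, where - $s=\alpha_{t-1}(i)/n$ for 3-Majority; - $s=\alpha_{t-1}(i)(\alpha_{t-1}(i)+\gamma_{t-1})/n$ for 2-Choices. (ii) For distinct opinions $i,j$, conditioned on $\mathcal F_{t-1}$, the random variable $\delta_t(i,j)-\mathbb E_{t-1}[\delta_t(i,j)]$ satisfies the $(2/n,s)$-Bernstein condition, where - $s=\frac2n(\alpha_{t-1}(i)+\alpha_{t-1}(j))$ for 3-Majority; - $s=\frac1n(\alpha_{t-1}(i)+\alpha_{t-1}(j))(\alpha_{t-1}(i)+\alpha_{t-1}(j)+\gamma_{t-1})$ for 2-Choices. (iii) Conditioned on $\mathcal F_{t-1}$, the random variable $\gamma_{t-1}-\gamma_t$ satisfies the one-sided $(2\sqrt{\gamma_{t-1}}/n,\,s)$-Bernstein condition, where - $s=\frac4n\gamma_{t-1}^{1.5}$ for 3-Majority; - $s=\frac8n\gamma_{t-1}^2$ for 2-Choices.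
   Context: **Setting.** Let $V$ be a set of $n$ vertices and $k\in\{1,\dots,n\}$. A configuration is a map $\mathsf{opn}\colon V\to[k]$. The process is synchronous: each round $t\ge1$ produces $\mathsf{opn}_t$ from $\mathsf{opn}_{t-1}$, and all vertices make their choices independently. **3-Majority.** Each vertex $v$ samples $w_1,w_2,w_3\in V$ independently and uniformly, with replacement. It sets $\mathsf{opn}_t(v)=\mathsf{opn}_{t-1}(w_1)$ if $\mathsf{opn}_{t-1}(w_1)=\mathsf{opn}_{t-1}(w_2)$, and $\mathsf{opn}_t(v)=\mathsf{opn}_{t-1}(w_3)$ otherwise. **2-Choices.** Each vertex $v$ samples $w_1,w_2\in V$ independently and uniformly, with replacement. It sets $\mathsf{opn}_t(v)=\mathsf{opn}_{t-1}(w_1)$ if $\mathsf{opn}_{t-1}(w_1)=\mathsf{opn}_{t-1}(w_2)$, and $\mathsf{opn}_t(v)=\mathsf{opn}_{t-1}(v)$ otherwise. **Basic quantities.** - $\alpha_t(i)=|\{v:\mathsf{opn}_t(v)=i\}|/n$. - $\gamma_t=\sum_{i\in[k]}\alpha_t(i)^2$. - $\delta_t(i,j)=\alpha_t(i)-\alpha_t(j)$. **Conditioning.** $\mathcal F_t$ is generated by $\mathsf{opn}_0,\dots,\mathsf{opn}_t$, and $\mathbb E_{t-1}[\cdot]=\mathbb E[\cdot\mid\mathcal F_{t-1}]$. **Bernstein conditions.** Let $D,s\ge0$. - $X$ satisfies the $(D,s)$-Bernstein condition if $\mathbb E[e^{\lambda X}]\le\exp\big(\frac{\lambda^2 s/2}{1-|\lambda|D/3}\big)$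 for all real $\lambda$ with $|\lambda|D<3$. - It satisfies the one-sided $(D,s)$-Bernstein condition if this holds for all $\lambda\ge0$ with $\lambda D<3$. - Conditioned on $\mathcal F_{t-1}$, these are required with conditional expectations, almost surely. *)

theory Defs
  imports "HOL-Probability.Probability"
begin

text \<open>Vertices form a finite nonempty set V (of type 'v); opinions are the
naturals 1..k; a configuration is a map 'v => nat (only its values on V matter).\<close>

datatype dynamics = ThreeMajority | TwoChoices

definition new_opinion :: "dynamics \<Rightarrow> 'v set \<Rightarrow> ('v \<Rightarrow> nat) \<Rightarrow> 'v \<Rightarrow> nat pmf" where
  "new_opinion dyn V c v =
    (case dyn of
       ThreeMajority \<Rightarrow>
         do { w1 \<leftarrow> pmf_of_set V; w2 \<leftarrow> pmf_of_set V; w3 \<leftarrow> pmf_of_set V;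
              return_pmf (if c w1 = c w2 then c w1 else c w3) }
     | TwoChoices \<Rightarrow>
         do { w1 \<leftarrow> pmf_of_set V; w2 \<leftarrow> pmf_of_set V;
              return_pmf (if c w1 = c w2 then c w1 else c v) })"

text \<open>One synchronous round: all vertices update independently. This is the
conditional law of opn_t given F_{t-1} when opn_{t-1} = c (default value 0
outside V is irrelevant).\<close>
definition step :: "dynamics \<Rightarrow> 'v set \<Rightarrow> ('v \<Rightarrow> nat) \<Rightarrow> ('v \<Rightarrow> nat) pmf" where
  "step dyn V c = Pi_pmf V 0 (new_opinion dyn V c)"

definition alpha :: "'v set \<Rightarrow> ('v \<Rightarrow> nat) \<Rightarrow> nat \<Rightarrow> real" where
  "alpha V c i = real (card {v \<in> V. c v = i}) / real (card V)"

definition gamma :: "'v set \<Rightarrow> nat \<Rightarrow> ('v \<Rightarrow> nat) \<Rightarrow> real" where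
  "gamma V k c = (\<Sum>i\<in>{1..k}. (alpha V c i)\<^sup>2)"

definition delta :: "'v set \<Rightarrow> ('v \<Rightarrow> nat) \<Rightarrow> nat \<Rightarrow> nat \<Rightarrow> real" where
  "delta V c i j = alpha V c i - alpha V c j"

definition bernstein :: "'a pmf \<Rightarrow> ('a \<Rightarrow> real) \<Rightarrow> real \<Rightarrow> real \<Rightarrow> bool" where
  "bernstein M X D s \<longleftrightarrow>
     (\<forall>l::real. \<bar>l\<bar> * D < 3 \<longrightarrow>
        measure_pmf.expectation M (\<lambda>x. exp (l * X x)) \<le> exp ((l\<^sup>2 * s / 2) / (1 - \<bar>l\<bar> * D / 3)))"

definition bernstein_one_sided :: "'a pmf \<Rightarrow> ('a \<Rightarrow> real) \<Rightarrow> real \<Rightarrow> real \<Rightarrow> bool" where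
  "bernstein_one_sided M X D s \<longleftrightarrow>
     (\<forall>l::real. l \<ge> 0 \<longrightarrow> l * D < 3 \<longrightarrow>
        measure_pmf.expectation M (\<lambda>x. exp (l * X x)) \<le> exp ((l\<^sup>2 * s / 2) / (1 - l * D / 3)))"

end

theory Submission
  imports Defs
begin


lemma fact_bound: "2 * 3 ^ n \<le> (fact (n + 2) :: real)"
proof (induction n)
  case 0 then show ?case by simp
next
  case (Suc n)
  have "fact (Suc n + 2) = real (n + 3) * fact (n + 2)"
    by (metis add_Suc add_Suc_shift fact_Suc numeral_3_eq_3 numeral_2_eq_2 of_nat_fact of_nat_mult)
  also have "\<dots> \<ge> 3 * fact (n+2)" by (intro mult_right_mono) auto
  finally have "3 * fact (n+2) \<le> (fact (Suc n + 2) :: real)" .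
  moreover have "2 * 3 ^ Suc n = 3 * (2 * 3 ^ n :: real)" by simp
  ultimately show ?case using Suc by linarith
qed

lemma exp_quad_bound:
  fixes x cc :: real
  assumes "\<bar>x\<bar> \<le> cc" "cc < 3"
  shows "exp x \<le> 1 + x + x\<^sup>2 / (2 * (1 - cc / 3))"
proof -
  let ?f = "\<lambda>n. x ^ n /\<^sub>R fact n"
  have s: "?f sums exp x" by (rule exp_converges)
  have s2: "(\<lambda>i. ?f (i + 2)) sums (exp x - (\<Sum>i<2. ?f i))"
    using sums_iff_shift[of ?f 2 "exp x - (\<Sum>i<2. ?f i)"] s by simp
  have q: "norm (cc/3) < 1" using assms by auto
  have g: "(\<lambda>i. x\<^sup>2/2 * (cc/3)^i) sums (x\<^sup>2/2 * (1 / (1 - cc/3)))"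
    by (rule sums_mult[OF geometric_sums[OF q]])
  have le: "?f (i + 2) \<le> x\<^sup>2/2 * (cc/3)^i" for i
  proof -
    have "?f (i+2) = x^(i+2) / fact (i+2)" by (simp add: divide_inverse_commute)
    also have "\<dots> \<le> \<bar>x\<bar>^(i+2) / fact (i+2)"
      by (intro divide_right_mono) (metis abs_ge_self power_abs, simp)
    also have "\<dots> = x\<^sup>2 * \<bar>x\<bar>^i / fact (i+2)" by (simp add: power_add power2_abs mult.commute power2_eq_square)
    also have "\<dots> \<le> x\<^sup>2 * cc^i / fact (i+2)"
      by (intro divide_right_mono mult_left_mono power_mono assms) auto
    also have "\<dots> \<le> x\<^sup>2 * cc^i / (2 * 3^i)"
      by (intro divide_left_mono fact_bound mult_nonneg_nonneg) (use assms in auto)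
    also have "\<dots> = x\<^sup>2/2 * (cc/3)^i" by (simp add: power_divide)
    finally show ?thesis .
  qed
  have "exp x - (\<Sum>i<2. ?f i) \<le> x\<^sup>2/2 * (1 / (1 - cc/3))"
    by (rule sums_le[OF le s2 g])
  moreover have "(\<Sum>i<2. ?f i) = 1 + x" by (simp add: numeral_2_eq_2)
  ultimately show ?thesis by (simp add: field_simps)
qed

lemma single_bern:
  fixes p :: "'a pmf" and Y :: "'a \<Rightarrow> real"
  assumes fin: "finite (set_pmf p)" and bd: "\<forall>x\<in>set_pmf p. \<bar>Y x\<bar> \<le> D"
    and m0: "measure_pmf.expectation p Y = 0" and l: "\<bar>l\<bar> * D < 3"
  shows "measure_pmf.expectation p (\<lambda>x. exp (l * Y x))
     \<le> exp (l\<^sup>2 * measure_pmf.expectation p (\<lambda>x. (Y x)\<^sup>2) / 2 / (1 - \<bar>l\<bar> * D / 3))"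
proof -
  note int = integrable_measure_pmf_finite[OF fin]
  define K where "K = l\<^sup>2 / (2 * (1 - \<bar>l\<bar> * D / 3))"
  have "measure_pmf.expectation p (\<lambda>x. exp (l * Y x))
      \<le> measure_pmf.expectation p (\<lambda>x. 1 + l * Y x + K * (Y x)\<^sup>2)"
  proof (rule integral_mono_AE[OF int int])
    show "AE x in measure_pmf p. exp (l * Y x) \<le> 1 + l * Y x + K * (Y x)\<^sup>2"
    proof (rule AE_pmfI)
      fix x assume x: "x \<in> set_pmf p"
      have "\<bar>l * Y x\<bar> \<le> \<bar>l\<bar> * D" using bd x by (simp add: abs_mult mult_left_mono)
      from exp_quad_bound[OF this l]
      show "exp (l * Y x) \<le> 1 + l * Y x + K * (Y x)\<^sup>2"
        by (simp add: K_def power_mult_distrib)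
    qed
  qed
  also have "\<dots> = 1 + l * measure_pmf.expectation p Y + K * measure_pmf.expectation p (\<lambda>x. (Y x)\<^sup>2)"
    by (simp add: int integral_add)
  also have "\<dots> = 1 + l\<^sup>2 * measure_pmf.expectation p (\<lambda>x. (Y x)\<^sup>2) / 2 / (1 - \<bar>l\<bar> * D / 3)"
    using m0 by (simp add: K_def)
  also have "\<dots> \<le> exp (l\<^sup>2 * measure_pmf.expectation p (\<lambda>x. (Y x)\<^sup>2) / 2 / (1 - \<bar>l\<bar> * D / 3))"
    by (rule exp_ge_add_one_self)
  finally show ?thesis .
qed

lemma fin_Pi:
  assumes "finite V" "\<forall>v\<in>V. finite (set_pmf (p v))"
  shows "finite (set_pmf (Pi_pmf V d p))"
  using assms by (simp add: set_Pi_pmf finite_PiE_dflt)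

lemma exp_sum_Pi:
  fixes g :: "'v \<Rightarrow> 'b \<Rightarrow> real"
  assumes fV: "finite V" and fp: "\<forall>v\<in>V. finite (set_pmf (p v))"
  shows "measure_pmf.expectation (Pi_pmf V d p) (\<lambda>y. \<Sum>v\<in>V. g v (y v))
       = (\<Sum>v\<in>V. measure_pmf.expectation (p v) (g v))"
proof -
  note int = integrable_measure_pmf_finite[OF fin_Pi[OF fV fp]]
  have "measure_pmf.expectation (Pi_pmf V d p) (\<lambda>y. \<Sum>v\<in>V. g v (y v))
      = (\<Sum>v\<in>V. measure_pmf.expectation (Pi_pmf V d p) (\<lambda>y. g v (y v)))"
    by (rule Bochner_Integration.integral_sum[where f="\<lambda>v y. g v (y v)" and I=V]) (rule int)
  also have "\<dots> = (\<Sum>v\<in>V. measure_pmf.expectation (p v) (g v))"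
  proof (rule sum.cong[OF refl])
    fix v assume v: "v \<in> V"
    have "measure_pmf.expectation (Pi_pmf V d p) (\<lambda>y. g v (y v))
        = measure_pmf.expectation (map_pmf (\<lambda>y. y v) (Pi_pmf V d p)) (g v)"
      by simp
    also have "\<dots> = measure_pmf.expectation (p v) (g v)"
      using Pi_pmf_component[OF fV, of v d p] v by simp
    finally show "measure_pmf.expectation (Pi_pmf V d p) (\<lambda>y. g v (y v)) = measure_pmf.expectation (p v) (g v)" .
  qed
  finally show ?thesis .
qed

lemma pi_bern:
  fixes p :: "'v \<Rightarrow> 'b pmf" and g :: "'v \<Rightarrow> 'b \<Rightarrow> real"
  assumes fV: "finite V" and fp: "\<forall>v\<in>V. finite (set_pmf (p v))"
    and bd: "\<forall>v\<in>V. \<forall>x\<in>set_pmf (p v). \<bar>g v x - measure_pmf.expectation (p v) (g v)\<bar> \<le> D"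
    and var: "(\<Sum>v\<in>V. measure_pmf.expectation (p v) (\<lambda>x. (g v x - measure_pmf.expectation (p v) (g v))\<^sup>2)) \<le> s"
  shows "bernstein (Pi_pmf V d p) (\<lambda>y. (\<Sum>v\<in>V. g v (y v))
            - measure_pmf.expectation (Pi_pmf V d p) (\<lambda>y. \<Sum>v\<in>V. g v (y v))) D s"
  unfolding bernstein_def
proof (intro allI impI)
  fix l :: real assume l: "\<bar>l\<bar> * D < 3"
  define m where "m v = measure_pmf.expectation (p v) (g v)" for v
  define sg where "sg v = measure_pmf.expectation (p v) (\<lambda>x. (g v x - m v)\<^sup>2)" for v
  define den where "den = 1 - \<bar>l\<bar> * D / 3"
  have den: "den > 0" using l by (simp add: den_def)
  have ES: "measure_pmf.expectation (Pi_pmf V d p) (\<lambda>y. \<Sum>v\<in>V. g v (y v)) = (\<Sum>v\<in>V. m v)"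
    unfolding m_def by (rule exp_sum_Pi[OF fV fp])
  have eq: "exp (l * ((\<Sum>v\<in>V. g v (y v)) - (\<Sum>v\<in>V. m v))) = (\<Prod>v\<in>V. exp (l * (g v (y v) - m v)))" for y
    by (simp add: exp_sum[OF fV, symmetric] sum_subtractf[symmetric] sum_distrib_left right_diff_distrib)
  have "measure_pmf.expectation (Pi_pmf V d p) (\<lambda>y. exp (l * ((\<Sum>v\<in>V. g v (y v)) - (\<Sum>v\<in>V. m v))))
      = measure_pmf.expectation (Pi_pmf V d p) (\<lambda>y. \<Prod>v\<in>V. exp (l * (g v (y v) - m v)))"
    by (simp only: eq)
  also have "\<dots> = (\<Prod>v\<in>V. measure_pmf.expectation (p v) (\<lambda>x. exp (l * (g v x - m v))))"
    by (rule expectation_prod_Pi_pmf[OF fV]) (auto intro: integrable_measure_pmf_finite simp: fp)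
  also have "\<dots> \<le> (\<Prod>v\<in>V. exp (l\<^sup>2 * sg v / 2 / den))"
  proof (rule prod_mono, intro conjI)
    fix v assume v: "v \<in> V"
    show "0 \<le> measure_pmf.expectation (p v) (\<lambda>x. exp (l * (g v x - m v)))"
      by (rule integral_nonneg_AE) auto
    have m0: "measure_pmf.expectation (p v) (\<lambda>x. g v x - m v) = 0"
      using integrable_measure_pmf_finite[of "p v" "g v"] fp v by (simp add: m_def)
    show "measure_pmf.expectation (p v) (\<lambda>x. exp (l * (g v x - m v))) \<le> exp (l\<^sup>2 * sg v / 2 / den)"
      unfolding sg_def den_def
      by (rule single_bern[where Y="\<lambda>x. g v x - m v", OF _ _ m0 l]) (use fp bd v in \<open>auto simp: m_def\<close>)
  qed
  also have "\<dots> = exp (l\<^sup>2 * (\<Sum>v\<in>V. sg v) / 2 / den)"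
    by (simp add: exp_sum[OF fV, symmetric] sum_divide_distrib sum_distrib_left)
  also have "\<dots> \<le> exp (l\<^sup>2 * s / 2 / den)"
    using var den by (auto simp: sg_def m_def intro!: divide_right_mono mult_left_mono)
  finally show "measure_pmf.expectation (Pi_pmf V d p)
          (\<lambda>x. exp (l * ((\<Sum>v\<in>V. g v (x v)) - measure_pmf.expectation (Pi_pmf V d p) (\<lambda>y. \<Sum>v\<in>V. g v (y v)))))
         \<le> exp (l\<^sup>2 * s / 2 / (1 - \<bar>l\<bar> * D / 3))"
    by (simp add: ES den_def)
qed

lemma bind_uniform:
  fixes h :: "'b \<Rightarrow> real"
  assumes fV: "finite V" and ne: "V \<noteq> {}" and fN: "\<forall>w\<in>V. finite (set_pmf (N w))"
  shows "measure_pmf.expectation (bind_pmf (pmf_of_set V) N) h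
       = (\<Sum>w\<in>V. measure_pmf.expectation (N w) h) / real (card V)"
proof -
  define A where "A = (\<Union>w\<in>V. set_pmf (N w))"
  have fA: "finite A" using fV fN by (auto simp: A_def)
  have "measure_pmf.expectation (bind_pmf (pmf_of_set V) N) h
      = (\<Sum>a\<in>A. h a * pmf (bind_pmf (pmf_of_set V) N) a)"
    by (rule integral_measure_pmf_real[OF fA]) (use fV ne in \<open>auto simp: A_def\<close>)
  also have "\<dots> = (\<Sum>a\<in>A. h a * ((\<Sum>w\<in>V. pmf (N w) a) / real (card V)))"
    by (intro sum.cong refl) (simp add: pmf_bind integral_pmf_of_set[OF ne fV])
  also have "\<dots> = (\<Sum>w\<in>V. (\<Sum>a\<in>A. h a * pmf (N w) a)) / real (card V)"
    by (simp add: sum_divide_distrib[symmetric] sum_distrib_left sum.swap[of _ A V] mult.assoc)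
  also have "\<dots> = (\<Sum>w\<in>V. measure_pmf.expectation (N w) h) / real (card V)"
  proof -
    have "(\<Sum>a\<in>A. h a * pmf (N w) a) = measure_pmf.expectation (N w) h" if w: "w \<in> V" for w
      by (rule integral_measure_pmf_real[OF fA, symmetric]) (use w in \<open>auto simp: A_def\<close>)
    then show ?thesis by simp
  qed
  finally show ?thesis .
qed

lemma expect_bounds:
  fixes f :: "'a \<Rightarrow> real"
  assumes "finite (set_pmf p)" "\<forall>x\<in>set_pmf p. lo \<le> f x \<and> f x \<le> hi"
  shows "lo \<le> measure_pmf.expectation p f \<and> measure_pmf.expectation p f \<le> hi"
proof
  have "measure_pmf.expectation p (\<lambda>_. lo) \<le> measure_pmf.expectation p f"
    by (rule integral_mono_AE) (use assms in \<open>auto intro: integrable_measure_pmf_finite AE_pmfI\<close>)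
  then show "lo \<le> measure_pmf.expectation p f" by simp
  have "measure_pmf.expectation p f \<le> measure_pmf.expectation p (\<lambda>_. hi)"
    by (rule integral_mono_AE) (use assms in \<open>auto intro: integrable_measure_pmf_finite AE_pmfI\<close>)
  then show "measure_pmf.expectation p f \<le> hi" by simp
qed

lemma var_eq:
  fixes g :: "'a \<Rightarrow> real"
  assumes fin: "finite (set_pmf p)"
  shows "measure_pmf.expectation p (\<lambda>x. (g x - measure_pmf.expectation p g)\<^sup>2)
       = measure_pmf.expectation p (\<lambda>x. (g x)\<^sup>2) - (measure_pmf.expectation p g)\<^sup>2"
proof -
  note int = integrable_measure_pmf_finite[OF fin]
  define m where "m = measure_pmf.expectation p g"
  have "(\<lambda>x. (g x - m)\<^sup>2) = (\<lambda>x. (g x)\<^sup>2 - 2 * m * g x + m\<^sup>2)"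
    by (auto simp: power2_eq_square algebra_simps)
  then have "measure_pmf.expectation p (\<lambda>x. (g x - m)\<^sup>2)
     = measure_pmf.expectation p (\<lambda>x. (g x)\<^sup>2) - 2 * m * measure_pmf.expectation p g + m\<^sup>2"
    by (simp add: int integral_add integral_diff)
  then show ?thesis by (simp add: m_def power2_eq_square)
qed

lemma var_le:
  fixes g :: "'a \<Rightarrow> real"
  assumes fin: "finite (set_pmf p)"
  shows "measure_pmf.expectation p (\<lambda>x. (g x - measure_pmf.expectation p g)\<^sup>2)
       \<le> measure_pmf.expectation p (\<lambda>x. (g x - t)\<^sup>2)"
proof -
  note int = integrable_measure_pmf_finite[OF fin]
  define m where "m = measure_pmf.expectation p g"
  have "(\<lambda>x. (g x - t)\<^sup>2) = (\<lambda>x. (g x)\<^sup>2 - 2 * t * g x + t\<^sup>2)"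
    by (auto simp: power2_eq_square algebra_simps)
  then have "measure_pmf.expectation p (\<lambda>x. (g x - t)\<^sup>2)
     = measure_pmf.expectation p (\<lambda>x. (g x)\<^sup>2) - 2 * t * m + t\<^sup>2"
    by (simp add: int integral_add integral_diff m_def)
  moreover have "(m - t)\<^sup>2 \<ge> 0" by simp
  ultimately show ?thesis using var_eq[OF fin, of g]
    by (simp add: m_def power2_eq_square algebra_simps)
qed



lemma card_ind: "finite V \<Longrightarrow> (\<Sum>v\<in>V. (if c' v = i then 1 else 0 :: real)) = real (card {v\<in>V. c' v = i})"
  by (simp add: sum.If_cases Int_def)

lemma alpha_sum: "finite V \<Longrightarrow> alpha V c' i = (\<Sum>v\<in>V. (if c' v = i then 1 / real (card V) else 0))"
proof -
  assume f: "finite V"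
  have "(\<Sum>v\<in>V. (if c' v = i then 1 / real (card V) else 0)) = (\<Sum>v\<in>V. (if c' v = i then 1 else 0)) / real (card V)"
    by (subst sum_divide_distrib) (auto intro!: sum.cong)
  then show ?thesis by (simp add: card_ind[OF f] alpha_def)
qed

locale setting =
  fixes V :: "'v set" and c :: "'v \<Rightarrow> nat" and k :: nat
  assumes fV: "finite V" and ne: "V \<noteq> {}" and cI: "\<forall>v\<in>V. c v \<in> {1..k}"
begin

abbreviation "a \<equiv> alpha V c"
abbreviation "g \<equiv> gamma V k c"
abbreviation "I \<equiv> {1..k}"
abbreviation "n \<equiv> real (card V)"

lemma npos: "n > 0" using fV ne by (simp add: card_gt_0_iff)

lemma sum_opinion: "(\<Sum>v\<in>V. f (c v)) = (\<Sum>i\<in>I. real (card {v\<in>V. c v = i}) * f i)"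
proof -
  have "(\<Sum>v\<in>V. f (c v)) = (\<Sum>v\<in>V. \<Sum>i\<in>I. (if c v = i then f i else 0))"
    by (intro sum.cong refl) (use cI in \<open>auto simp: sum.delta\<close>)
  also have "\<dots> = (\<Sum>i\<in>I. \<Sum>v\<in>V. (if c v = i then f i else 0))" by (rule sum.swap)
  also have "\<dots> = (\<Sum>i\<in>I. real (card {v\<in>V. c v = i}) * f i)"
  proof (intro sum.cong refl)
    fix i
    have "(\<Sum>v\<in>V. (if c v = i then f i else 0)) = f i * (\<Sum>v\<in>V. (if c v = i then 1 else 0))"
      by (subst sum_distrib_left) (auto intro!: sum.cong)
    then show "(\<Sum>v\<in>V. (if c v = i then f i else 0)) = real (card {v\<in>V. c v = i}) * f i"
      by (simp add: card_ind[OF fV])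
  qed
  finally show ?thesis .
qed

lemma card_a: "real (card {v\<in>V. c v = i}) = n * a i"
  using npos by (simp add: alpha_def)

lemma sum_opinion_a: "(\<Sum>v\<in>V. f (c v)) = n * (\<Sum>i\<in>I. a i * f i)"
  by (simp add: sum_opinion card_a sum_distrib_left mult.assoc)

lemma a_zero: "x \<notin> I \<Longrightarrow> a x = 0"
proof -
  assume "x \<notin> I"
  then have e: "{v\<in>V. c v = x} = {}" using cI by auto
  show ?thesis by (simp only: alpha_def e) simp
qed

lemma a_nonneg: "a x \<ge> 0" by (simp add: alpha_def)

lemma a_le1: "a x \<le> 1"
proof -
  have "card {v\<in>V. c v = x} \<le> card V" by (rule card_mono[OF fV]) auto
  then show ?thesis using npos by (simp add: alpha_def)
qed

lemma sum_a: "(\<Sum>i\<in>I. a i) = 1"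
  using sum_opinion_a[of "\<lambda>_. 1"] npos by simp

lemma g_def: "g = (\<Sum>i\<in>I. (a i)\<^sup>2)" by (simp add: gamma_def)

lemma a_sq_le_g: "(a x)\<^sup>2 \<le> g"
proof (cases "x \<in> I")
  case True
  then show ?thesis unfolding g_def by (intro member_le_sum) auto
next
  case False
  then show ?thesis unfolding g_def by (simp add: a_zero sum_nonneg)
qed

lemma g_nonneg: "g \<ge> 0" unfolding g_def by (simp add: sum_nonneg)

lemma g_le1: "g \<le> 1"
proof -
  have "g \<le> (\<Sum>i\<in>I. a i)" unfolding g_def
    by (intro sum_mono) (simp add: power2_eq_square a_nonneg a_le1 mult_left_le)
  then show ?thesis using sum_a by linarith
qed

lemma a_le_sqrt: "a x \<le> sqrt g"
  using a_sq_le_g[of x] a_nonneg[of x] by (simp add: real_le_rsqrt)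

lemma double_sum:
  "(\<Sum>w1\<in>V. \<Sum>w2\<in>V. (if c w1 = c w2 then h (c w1) else K)) / n\<^sup>2
   = (\<Sum>j\<in>I. (a j)\<^sup>2 * h j) + (1 - g) * K"
proof -
  have inner: "(\<Sum>w2\<in>V. (if c w1 = c w2 then h (c w1) else K)) = n * K + n * a (c w1) * (h (c w1) - K)" for w1
  proof -
    have "(\<Sum>w2\<in>V. (if c w1 = c w2 then h (c w1) else K)) = (\<Sum>w2\<in>V. K + (h (c w1) - K) * (if c w2 = c w1 then 1 else 0))"
      by (intro sum.cong refl) auto
    also have "\<dots> = n * K + (h (c w1) - K) * real (card {v\<in>V. c v = c w1})"
      by (simp add: sum.distrib sum_distrib_left[symmetric] card_ind[OF fV])
    finally show ?thesis by (simp add: card_a algebra_simps)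
  qed
  have "(\<Sum>w1\<in>V. \<Sum>w2\<in>V. (if c w1 = c w2 then h (c w1) else K))
      = (\<Sum>w1\<in>V. n * K + n * a (c w1) * (h (c w1) - K))" by (simp add: inner)
  also have "\<dots> = n * n * K + n * (n * (\<Sum>j\<in>I. a j * (a j * (h j - K))))"
    using sum_opinion_a[of "\<lambda>x. a x * (h x - K)"]
    by (simp add: sum.distrib sum_distrib_left[symmetric] mult.assoc)
  also have "(\<Sum>j\<in>I. a j * (a j * (h j - K))) = (\<Sum>j\<in>I. (a j)\<^sup>2 * h j) - K * g"
    by (simp add: g_def power2_eq_square algebra_simps sum_subtractf sum_distrib_left)
  finally show ?thesis using npos by (simp add: power2_eq_square field_simps)
qed

lemma fin_new: "finite (set_pmf (new_opinion dyn V c v))"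
  using fV ne by (cases dyn) (auto simp: new_opinion_def)

lemma E3: "measure_pmf.expectation (new_opinion ThreeMajority V c v) h
    = (\<Sum>j\<in>I. (a j)\<^sup>2 * h j) + (1 - g) * (\<Sum>j\<in>I. a j * h j)"
proof -
  define H where "H = (\<Sum>j\<in>I. a j * h j)"
  have "measure_pmf.expectation (new_opinion ThreeMajority V c v) h
      = (\<Sum>w1\<in>V. (\<Sum>w2\<in>V. (\<Sum>w3\<in>V. h (if c w1 = c w2 then c w1 else c w3)) / n) / n) / n"
    using fV ne by (simp add: new_opinion_def bind_uniform)
  also have "\<dots> = (\<Sum>w1\<in>V. \<Sum>w2\<in>V. (if c w1 = c w2 then h (c w1) else H)) / n\<^sup>2"
  proof -
    have "(\<Sum>w3\<in>V. h (if c w1 = c w2 then c w1 else c w3)) / n = (if c w1 = c w2 then h (c w1) else H)" for w1 w2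
      using npos sum_opinion_a[of h] by (auto simp: H_def)
    then show ?thesis by (simp add: sum_divide_distrib[symmetric] power2_eq_square)
  qed
  also have "\<dots> = (\<Sum>j\<in>I. (a j)\<^sup>2 * h j) + (1 - g) * H" by (rule double_sum)
  finally show ?thesis by (simp add: H_def)
qed

lemma E2: "v \<in> V \<Longrightarrow> measure_pmf.expectation (new_opinion TwoChoices V c v) h
    = (\<Sum>j\<in>I. (a j)\<^sup>2 * h j) + (1 - g) * h (c v)"
proof -
  have "measure_pmf.expectation (new_opinion TwoChoices V c v) h
      = (\<Sum>w1\<in>V. (\<Sum>w2\<in>V. h (if c w1 = c w2 then c w1 else c v)) / n) / n"
    using fV ne by (simp add: new_opinion_def bind_uniform)
  also have "\<dots> = (\<Sum>w1\<in>V. \<Sum>w2\<in>V. (if c w1 = c w2 then h (c w1) else h (c v))) / n\<^sup>2"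
    by (simp add: sum_divide_distrib[symmetric] power2_eq_square if_distrib)
  also have "\<dots> = (\<Sum>j\<in>I. (a j)\<^sup>2 * h j) + (1 - g) * h (c v)" by (rule double_sum)
  finally show ?thesis .
qed

lemma sum_delta_mult: "i \<in> I \<Longrightarrow> (\<Sum>j\<in>I. f j * (if j = i then C else 0)) = f i * (C::real)"
  by (simp add: if_distrib[of "\<lambda>x. f _ * x"] sum.delta cong: if_cong)

lemma ineq1: "q = a0\<^sup>2 + (1 - g0) * a0 \<Longrightarrow> 0 \<le> a0 \<Longrightarrow> a0 \<le> 1 \<Longrightarrow> a0\<^sup>2 \<le> g0 \<Longrightarrow> g0 \<le> (1::real)
   \<Longrightarrow> q - q\<^sup>2 \<le> a0"
proof -
  assume h: "q = a0\<^sup>2 + (1 - g0) * a0" "0 \<le> a0" "a0 \<le> 1" "a0\<^sup>2 \<le> g0" "g0 \<le> 1"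
  have q0: "q \<ge> 0" using h by (simp add: mult_nonneg_nonneg)
  have "a0 * g0 \<ge> 0" using h by (intro mult_nonneg_nonneg) (auto intro: order_trans[OF zero_le_power2])
  then have q1: "q \<le> a0 * (1 + a0)" using h by (simp add: power2_eq_square algebra_simps)
  show ?thesis
  proof (cases "q \<le> a0")
    case True then show ?thesis using q0 by (smt (verit) zero_le_power2)
  next
    case False
    then have "1 - q \<le> 1 - a0" by simp
    have "(1 - g0) * a0 \<le> 1 - g0" using h by (simp add: mult_left_le)
    then have qle: "q \<le> 1" using h by simp
    have "q - q\<^sup>2 = q * (1 - q)" by (simp add: power2_eq_square algebra_simps)
    also have "\<dots> \<le> a0 * (1 + a0) * (1 - a0)"
      using False q1 h qle by (intro mult_mono) auto
    also have "\<dots> \<le> a0" using h by (simp add: algebra_simps power2_eq_square)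
    finally show ?thesis .
  qed
qed

lemma E3_ind: "i \<in> I \<Longrightarrow> measure_pmf.expectation (new_opinion ThreeMajority V c v) (\<lambda>x. if x = i then C else 0)
   = ((a i)\<^sup>2 + (1 - g) * a i) * C"
  unfolding E3 sum_delta_mult by (simp add: algebra_simps)

lemma E2_ind: "v \<in> V \<Longrightarrow> i \<in> I \<Longrightarrow> measure_pmf.expectation (new_opinion TwoChoices V c v) (\<lambda>x. if x = i then C else 0)
   = ((a i)\<^sup>2 + (1 - g) * (if c v = i then 1 else 0)) * C"
  unfolding E2 sum_delta_mult by (simp add: algebra_simps)

lemma part1_gen:
  fixes dyn and i :: nat and s :: real
  defines "q \<equiv> \<lambda>v. measure_pmf.expectation (new_opinion dyn V c v) (\<lambda>x. if x = i then 1 else 0)"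
  assumes i: "i \<in> I" and S: "(\<Sum>v\<in>V. (q v - (q v)\<^sup>2)) / n\<^sup>2 \<le> s"
  shows "bernstein (step dyn V c) (\<lambda>c'. alpha V c' i - measure_pmf.expectation (step dyn V c) (\<lambda>c''. alpha V c'' i)) (1/n) s"
proof -
  define G where "G = (\<lambda>(v::'v) x. if x = i then 1 / n else (0::real))"
  let ?p = "new_opinion dyn V c"
  have fp: "\<forall>v\<in>V. finite (set_pmf (?p v))" using fin_new by auto
  have EG: "measure_pmf.expectation (?p v) (G v) = q v / n" for v
  proof -
    have "G v = (\<lambda>x. (1/n) * (if x = i then 1 else 0))" by (auto simp: G_def)
    then show ?thesis by (simp add: q_def)
  qed
  have EG2: "measure_pmf.expectation (?p v) (\<lambda>x. (G v x)\<^sup>2) = q v / n\<^sup>2" for v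
  proof -
    have "(\<lambda>x. (G v x)\<^sup>2) = (\<lambda>x. (1/n\<^sup>2) * (if x = i then 1 else 0))" by (auto simp: G_def power2_eq_square)
    then show ?thesis by (simp add: q_def)
  qed
  have qb: "0 \<le> q v \<and> q v \<le> 1" for v
    unfolding q_def by (rule expect_bounds[OF fin_new]) auto
  have "bernstein (Pi_pmf V 0 ?p) (\<lambda>y. (\<Sum>v\<in>V. G v (y v))
            - measure_pmf.expectation (Pi_pmf V 0 ?p) (\<lambda>y. \<Sum>v\<in>V. G v (y v))) (1/n) s"
  proof (rule pi_bern[OF fV fp])
    show "\<forall>v\<in>V. \<forall>x\<in>set_pmf (?p v). \<bar>G v x - measure_pmf.expectation (?p v) (G v)\<bar> \<le> 1/n"
    proof (intro ballI)
      fix v x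
      have "0 \<le> q v / n" "q v / n \<le> 1/n" using qb[of v] npos by (auto intro: divide_right_mono)
      then show "\<bar>G v x - measure_pmf.expectation (?p v) (G v)\<bar> \<le> 1/n"
        by (simp only: EG) (auto simp: G_def)
    qed
    have V1: "measure_pmf.expectation (?p v) (\<lambda>x. (G v x - measure_pmf.expectation (?p v) (G v))\<^sup>2)
        = (q v - (q v)\<^sup>2) / n\<^sup>2" for v
    proof -
      have "measure_pmf.expectation (?p v) (\<lambda>x. (G v x - measure_pmf.expectation (?p v) (G v))\<^sup>2)
         = measure_pmf.expectation (?p v) (\<lambda>x. (G v x)\<^sup>2) - (measure_pmf.expectation (?p v) (G v))\<^sup>2"
        by (rule var_eq[OF fin_new])
      then show ?thesis by (simp add: EG EG2 power_divide diff_divide_distrib)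
    qed
    have "(\<Sum>v\<in>V. measure_pmf.expectation (?p v) (\<lambda>x. (G v x - measure_pmf.expectation (?p v) (G v))\<^sup>2))
        = (\<Sum>v\<in>V. (q v - (q v)\<^sup>2)) / n\<^sup>2"
      by (simp only: V1 sum_divide_distrib[symmetric])
    then show "(\<Sum>v\<in>V. measure_pmf.expectation (?p v) (\<lambda>x. (G v x - measure_pmf.expectation (?p v) (G v))\<^sup>2)) \<le> s"
      using S by simp
  qed
  moreover have aeq: "alpha V c' i = (\<Sum>v\<in>V. G v (c' v))" for c'
    by (auto simp: alpha_sum[OF fV] G_def)
  ultimately show ?thesis by (simp add: step_def aeq)
qed

lemma sum_if_a: "i \<in> I \<Longrightarrow> (\<Sum>j\<in>I. a j * (if j = i then X else Y)) = a i * X + (1 - a i) * Y"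
proof -
  assume i: "i \<in> I"
  have "(\<Sum>j\<in>I. a j * (if j = i then X else Y)) = (\<Sum>j\<in>I. a j * Y + a j * (if j = i then X - Y else 0))"
    by (intro sum.cong refl) (auto simp: algebra_simps)
  also have "\<dots> = (\<Sum>j\<in>I. a j) * Y + a i * (X - Y)"
    by (simp only: sum.distrib sum_delta_mult[OF i] sum_distrib_right)
  also have "\<dots> = a i * X + (1 - a i) * Y" by (simp only: sum_a) (simp add: algebra_simps)
  finally show ?thesis .
qed

lemma sum_if2_a: "i \<in> I \<Longrightarrow> j \<in> I \<Longrightarrow> i \<noteq> j \<Longrightarrow>
   (\<Sum>l\<in>I. a l * (if l = i then X else if l = j then Y else Z)) = a i * X + a j * Y + (1 - a i - a j) * Z"
proof -
  assume i: "i \<in> I" and j: "j \<in> I" and ij: "i \<noteq> j"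
  have "(\<Sum>l\<in>I. a l * (if l = i then X else if l = j then Y else Z))
      = (\<Sum>l\<in>I. a l * Z + a l * (if l = i then X - Z else 0) + a l * (if l = j then Y - Z else 0))"
    by (intro sum.cong refl) (use ij in \<open>auto simp: algebra_simps\<close>)
  also have "\<dots> = (\<Sum>l\<in>I. a l) * Z + a i * (X - Z) + a j * (Y - Z)"
    by (simp only: sum.distrib sum_delta_mult[OF i] sum_delta_mult[OF j] sum_distrib_right)
  also have "\<dots> = a i * X + a j * Y + (1 - a i - a j) * Z" by (simp only: sum_a) (simp add: algebra_simps)
  finally show ?thesis .
qed

lemma part1_3M: "i \<in> I \<Longrightarrow>
  bernstein (step ThreeMajority V c) (\<lambda>c'. alpha V c' i - measure_pmf.expectation (step ThreeMajority V c) (\<lambda>c''. alpha V c'' i)) (1/n) (a i / n)"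
proof (rule part1_gen)
  assume i: "i \<in> I"
  define q where "q = (a i)\<^sup>2 + (1 - g) * a i"
  have "q - q\<^sup>2 \<le> a i" by (rule ineq1[OF q_def a_nonneg a_le1 a_sq_le_g g_le1])
  then have "(q - q\<^sup>2) / n \<le> a i / n" using npos by (simp add: divide_right_mono)
  moreover have e: "measure_pmf.expectation (new_opinion ThreeMajority V c v) (\<lambda>x. if x = i then 1 else 0) = q" for v
    by (simp add: E3_ind[OF i] q_def)
  ultimately show "(\<Sum>v\<in>V. measure_pmf.expectation (new_opinion ThreeMajority V c v) (\<lambda>x. if x = i then 1 else 0) -
          (measure_pmf.expectation (new_opinion ThreeMajority V c v) (\<lambda>x. if x = i then 1 else 0))\<^sup>2) / n\<^sup>2 \<le> a i / n"
    using npos by (simp only: e sum_constant) (simp add: power2_eq_square)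
qed

lemma part1_2C: "i \<in> I \<Longrightarrow>
  bernstein (step TwoChoices V c) (\<lambda>c'. alpha V c' i - measure_pmf.expectation (step TwoChoices V c) (\<lambda>c''. alpha V c'' i)) (1/n)
    (a i * (a i + g) / n)"
proof (rule part1_gen)
  assume i: "i \<in> I"
  define q1 where "q1 = (a i)\<^sup>2 + (1 - g)"
  define q0 where "q0 = (a i)\<^sup>2"
  have "(\<Sum>v\<in>V. measure_pmf.expectation (new_opinion TwoChoices V c v) (\<lambda>x. if x = i then 1 else 0) -
          (measure_pmf.expectation (new_opinion TwoChoices V c v) (\<lambda>x. if x = i then 1 else 0))\<^sup>2)
      = (\<Sum>v\<in>V. (\<lambda>j. if j = i then q1 - q1\<^sup>2 else q0 - q0\<^sup>2) (c v))"
    by (intro sum.cong refl) (simp add: E2_ind[OF _ i] q1_def q0_def)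
  also have "\<dots> = n * (a i * (q1 - q1\<^sup>2) + (1 - a i) * (q0 - q0\<^sup>2))"
    by (subst sum_opinion_a[of "\<lambda>j. if j = i then q1 - q1\<^sup>2 else q0 - q0\<^sup>2"]) (simp only: sum_if_a[OF i])
  finally have eq: "(\<Sum>v\<in>V. measure_pmf.expectation (new_opinion TwoChoices V c v) (\<lambda>x. if x = i then 1 else 0) -
          (measure_pmf.expectation (new_opinion TwoChoices V c v) (\<lambda>x. if x = i then 1 else 0))\<^sup>2)
      = n * (a i * (q1 - q1\<^sup>2) + (1 - a i) * (q0 - q0\<^sup>2))" .
  have a0: "0 \<le> a i" "a i \<le> 1" "(a i)\<^sup>2 \<le> g" "g \<le> 1" using a_nonneg a_le1 a_sq_le_g g_le1 by auto
  have X: "q1 - q1\<^sup>2 \<le> g - (a i)\<^sup>2"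
  proof -
    have "0 \<le> q1" "q1 \<le> 1" using a0 by (auto simp: q1_def)
    have "0 \<le> 1 + q1\<^sup>2 - 2 * q1" using zero_le_power2[of "1 - q1"] by (simp add: power2_diff)
    then have "q1 - q1\<^sup>2 \<le> 1 - q1" by linarith
    then show ?thesis by (simp add: q1_def)
  qed
  have Y: "q0 - q0\<^sup>2 \<le> (a i)\<^sup>2" by (simp add: q0_def)
  have "a i * (q1 - q1\<^sup>2) + (1 - a i) * (q0 - q0\<^sup>2) \<le> a i * (g - (a i)\<^sup>2) + (1 - a i) * (a i)\<^sup>2"
    using X Y a0 by (intro add_mono mult_left_mono) auto
  also have "\<dots> = a i * (a i + g) - 2 * (a i)^3"
    by (simp add: algebra_simps power2_eq_square power3_eq_cube)
  also have "\<dots> \<le> a i * (a i + g)" using a0 by simp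
  finally have le: "a i * (q1 - q1\<^sup>2) + (1 - a i) * (q0 - q0\<^sup>2) \<le> a i * (a i + g)" .
  show "(\<Sum>v\<in>V. measure_pmf.expectation (new_opinion TwoChoices V c v) (\<lambda>x. if x = i then 1 else 0) -
          (measure_pmf.expectation (new_opinion TwoChoices V c v) (\<lambda>x. if x = i then 1 else 0))\<^sup>2) / n\<^sup>2
       \<le> a i * (a i + g) / n"
    unfolding eq using le npos by (simp add: power2_eq_square divide_right_mono)
qed

lemma part2_gen:
  fixes dyn and i j :: nat and s :: real
  defines "qi \<equiv> \<lambda>v. measure_pmf.expectation (new_opinion dyn V c v) (\<lambda>x. if x = i then 1 else 0)"
  defines "qj \<equiv> \<lambda>v. measure_pmf.expectation (new_opinion dyn V c v) (\<lambda>x. if x = j then 1 else 0)"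
  assumes ij: "i \<noteq> j" and S: "(\<Sum>v\<in>V. (qi v + qj v - (qi v - qj v)\<^sup>2)) / n\<^sup>2 \<le> s"
  shows "bernstein (step dyn V c) (\<lambda>c'. delta V c' i j - measure_pmf.expectation (step dyn V c) (\<lambda>c''. delta V c'' i j)) (2/n) s"
proof -
  define G where "G = (\<lambda>(v::'v) x. (if x = i then 1 / n else (0::real)) - (if x = j then 1 / n else 0))"
  let ?p = "new_opinion dyn V c"
  have fp: "\<forall>v\<in>V. finite (set_pmf (?p v))" using fin_new by auto
  note int = integrable_measure_pmf_finite[OF fin_new]
  have EG: "measure_pmf.expectation (?p v) (G v) = (qi v - qj v) / n" for v
  proof -
    have "G v = (\<lambda>x. (1/n) * (if x = i then 1 else 0) - (1/n) * (if x = j then 1 else 0))" by (auto simp: G_def)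
    then show ?thesis by (simp add: qi_def qj_def int diff_divide_distrib)
  qed
  have EG2: "measure_pmf.expectation (?p v) (\<lambda>x. (G v x)\<^sup>2) = (qi v + qj v) / n\<^sup>2" for v
  proof -
    have "(\<lambda>x. (G v x)\<^sup>2) = (\<lambda>x. (1/n\<^sup>2) * (if x = i then 1 else 0) + (1/n\<^sup>2) * (if x = j then 1 else 0))"
      using ij by (auto simp: G_def power2_eq_square)
    then show ?thesis by (simp add: qi_def qj_def int add_divide_distrib)
  qed
  have Gb: "-1/n \<le> G v x \<and> G v x \<le> 1/n" for v x using npos by (auto simp: G_def field_simps)
  have "bernstein (Pi_pmf V 0 ?p) (\<lambda>y. (\<Sum>v\<in>V. G v (y v))
            - measure_pmf.expectation (Pi_pmf V 0 ?p) (\<lambda>y. \<Sum>v\<in>V. G v (y v))) (2/n) s"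
  proof (rule pi_bern[OF fV fp])
    show "\<forall>v\<in>V. \<forall>x\<in>set_pmf (?p v). \<bar>G v x - measure_pmf.expectation (?p v) (G v)\<bar> \<le> 2/n"
    proof (intro ballI)
      fix v x
      have "-1/n \<le> measure_pmf.expectation (?p v) (G v) \<and> measure_pmf.expectation (?p v) (G v) \<le> 1/n"
        by (rule expect_bounds[OF fin_new]) (use Gb in auto)
      then show "\<bar>G v x - measure_pmf.expectation (?p v) (G v)\<bar> \<le> 2/n"
        using Gb[of v x] by (auto simp: abs_le_iff)
    qed
    have V1: "measure_pmf.expectation (?p v) (\<lambda>x. (G v x - measure_pmf.expectation (?p v) (G v))\<^sup>2)
        = (qi v + qj v - (qi v - qj v)\<^sup>2) / n\<^sup>2" for v
    proof -
      have "measure_pmf.expectation (?p v) (\<lambda>x. (G v x - measure_pmf.expectation (?p v) (G v))\<^sup>2)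
         = measure_pmf.expectation (?p v) (\<lambda>x. (G v x)\<^sup>2) - (measure_pmf.expectation (?p v) (G v))\<^sup>2"
        by (rule var_eq[OF fin_new])
      then show ?thesis by (simp add: EG EG2 power_divide diff_divide_distrib[symmetric])
    qed
    have "(\<Sum>v\<in>V. measure_pmf.expectation (?p v) (\<lambda>x. (G v x - measure_pmf.expectation (?p v) (G v))\<^sup>2))
        = (\<Sum>v\<in>V. (qi v + qj v - (qi v - qj v)\<^sup>2)) / n\<^sup>2"
      by (simp only: V1 sum_divide_distrib[symmetric])
    then show "(\<Sum>v\<in>V. measure_pmf.expectation (?p v) (\<lambda>x. (G v x - measure_pmf.expectation (?p v) (G v))\<^sup>2)) \<le> s"
      using S by simp
  qed
  moreover have deq: "delta V c' i j = (\<Sum>v\<in>V. G v (c' v))" for c'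
    by (simp add: delta_def alpha_sum[OF fV] G_def sum_subtractf)
  ultimately show ?thesis by (simp add: step_def deq)
qed

lemma a_pair: "i \<in> I \<Longrightarrow> j \<in> I \<Longrightarrow> i \<noteq> j \<Longrightarrow> a i + a j \<le> 1"
proof -
  assume "i \<in> I" "j \<in> I" "i \<noteq> j"
  then have "sum a {i, j} \<le> sum a I" by (intro sum_mono2) (auto simp: a_nonneg)
  then show ?thesis using \<open>i \<noteq> j\<close> sum_a by simp
qed

lemma part2_3M: "i \<in> I \<Longrightarrow> j \<in> I \<Longrightarrow> i \<noteq> j \<Longrightarrow>
  bernstein (step ThreeMajority V c) (\<lambda>c'. delta V c' i j - measure_pmf.expectation (step ThreeMajority V c) (\<lambda>c''. delta V c'' i j)) (2/n)
    (2 / n * (a i + a j))"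
proof (rule part2_gen)
  assume i: "i \<in> I" and j: "j \<in> I" and ij: "i \<noteq> j"
  define qi where "qi = (a i)\<^sup>2 + (1 - g) * a i"
  define qj where "qj = (a j)\<^sup>2 + (1 - g) * a j"
  have ei: "measure_pmf.expectation (new_opinion ThreeMajority V c v) (\<lambda>x. if x = i then 1 else 0) = qi" for v
    by (simp add: E3_ind[OF i] qi_def)
  have ej: "measure_pmf.expectation (new_opinion ThreeMajority V c v) (\<lambda>x. if x = j then 1 else 0) = qj" for v
    by (simp add: E3_ind[OF j] qj_def)
  have b: "qi \<le> 2 * a i" if "qi = (a i)\<^sup>2 + (1 - g) * a i" for qi i
  proof -
    have "(a i)\<^sup>2 \<le> a i" using a_nonneg a_le1 by (simp add: power2_eq_square mult_left_le)
    moreover have "(1 - g) * a i \<le> a i" using a_nonneg g_nonneg g_le1 by (simp add: mult_left_le_one_le)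
    ultimately show ?thesis using that by linarith
  qed
  have "qi + qj - (qi - qj)\<^sup>2 \<le> 2 * (a i + a j)" using b[OF qi_def] b[OF qj_def] zero_le_power2[of "qi - qj"] by (smt (verit))
  then have "n * (qi + qj - (qi - qj)\<^sup>2) / n\<^sup>2 \<le> 2 / n * (a i + a j)"
    using npos by (simp add: power2_eq_square divide_right_mono)
  then show "(\<Sum>v\<in>V. measure_pmf.expectation (new_opinion ThreeMajority V c v) (\<lambda>x. if x = i then 1 else 0) +
          measure_pmf.expectation (new_opinion ThreeMajority V c v) (\<lambda>x. if x = j then 1 else 0) -
          (measure_pmf.expectation (new_opinion ThreeMajority V c v) (\<lambda>x. if x = i then 1 else 0) -
           measure_pmf.expectation (new_opinion ThreeMajority V c v) (\<lambda>x. if x = j then 1 else 0))\<^sup>2) / n\<^sup>2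
    \<le> 2 / n * (a i + a j)"
    by (simp only: ei ej sum_constant)
qed

lemma varX: "(p::real) + r - (p - r)\<^sup>2 \<le> 1 - (p - r) + 2 * r"
proof -
  have "0 \<le> (1 - (p - r))\<^sup>2" by simp
  then show ?thesis by (simp add: power2_diff power2_eq_square algebra_simps)
qed

lemma part2_2C: "i \<in> I \<Longrightarrow> j \<in> I \<Longrightarrow> i \<noteq> j \<Longrightarrow>
  bernstein (step TwoChoices V c) (\<lambda>c'. delta V c' i j - measure_pmf.expectation (step TwoChoices V c) (\<lambda>c''. delta V c'' i j)) (2/n)
    (1 / n * (a i + a j) * (a i + a j + g))"
proof (rule part2_gen)
  assume i: "i \<in> I" and j: "j \<in> I" and ij: "i \<noteq> j"
  define x where "x = a i"
  define y where "y = a j"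
  define X where "X = (x\<^sup>2 + (1 - g)) + y\<^sup>2 - ((x\<^sup>2 + (1 - g)) - y\<^sup>2)\<^sup>2"
  define Y where "Y = x\<^sup>2 + (y\<^sup>2 + (1 - g)) - (x\<^sup>2 - (y\<^sup>2 + (1 - g)))\<^sup>2"
  define Z where "Z = x\<^sup>2 + y\<^sup>2 - (x\<^sup>2 - y\<^sup>2)\<^sup>2"
  let ?qi = "\<lambda>v. measure_pmf.expectation (new_opinion TwoChoices V c v) (\<lambda>x. if x = i then 1 else 0)"
  let ?qj = "\<lambda>v. measure_pmf.expectation (new_opinion TwoChoices V c v) (\<lambda>x. if x = j then 1 else 0)"
  have "(\<Sum>v\<in>V. ?qi v + ?qj v - (?qi v - ?qj v)\<^sup>2)
      = (\<Sum>v\<in>V. (\<lambda>l. if l = i then X else if l = j then Y else Z) (c v))"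
    by (intro sum.cong refl) (use ij in \<open>simp add: E2_ind[OF _ i] E2_ind[OF _ j] X_def Y_def Z_def x_def y_def\<close>)
  also have "\<dots> = n * (x * X + y * Y + (1 - x - y) * Z)"
    by (subst sum_opinion_a[of "\<lambda>l. if l = i then X else if l = j then Y else Z"])
       (simp only: sum_if2_a[OF i j ij] x_def y_def)
  finally have eq: "(\<Sum>v\<in>V. ?qi v + ?qj v - (?qi v - ?qj v)\<^sup>2) = n * (x * X + y * Y + (1 - x - y) * Z)" .
  have x0: "0 \<le> x" "0 \<le> y" "x + y \<le> 1" using a_nonneg a_pair[OF i j ij] by (auto simp: x_def y_def)
  have hX: "X \<le> g - x\<^sup>2 + 3 * y\<^sup>2" using varX[of "x\<^sup>2 + (1 - g)" "y\<^sup>2"] by (simp add: X_def)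
  have hY: "Y \<le> g - y\<^sup>2 + 3 * x\<^sup>2" using varX[of "y\<^sup>2 + (1 - g)" "x\<^sup>2"]
    by (simp add: Y_def power2_commute algebra_simps)
  have hZ: "Z \<le> x\<^sup>2 + y\<^sup>2" by (simp add: Z_def)
  have "x * X + y * Y + (1 - x - y) * Z
      \<le> x * (g - x\<^sup>2 + 3 * y\<^sup>2) + y * (g - y\<^sup>2 + 3 * x\<^sup>2) + (1 - x - y) * (x\<^sup>2 + y\<^sup>2)"
    using x0 hX hY hZ by (intro add_mono mult_left_mono) auto
  also have "\<dots> = (x + y) * (x + y + g) - 2 * (x + y) * (x - y)\<^sup>2 - 2 * x * y"
    by (simp add: power2_eq_square algebra_simps)
  also have "\<dots> \<le> (x + y) * (x + y + g)"
  proof -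
    have "0 \<le> 2 * (x + y) * (x - y)\<^sup>2" "0 \<le> 2 * x * y" using x0 by simp_all
    then show ?thesis by linarith
  qed
  finally have le: "x * X + y * Y + (1 - x - y) * Z \<le> (x + y) * (x + y + g)" .
  show "(\<Sum>v\<in>V. ?qi v + ?qj v - (?qi v - ?qj v)\<^sup>2) / n\<^sup>2 \<le> 1 / n * (a i + a j) * (a i + a j + g)"
    unfolding eq using le npos by (simp add: power2_eq_square divide_right_mono x_def y_def)
qed

lemma tangent: "gamma V k c' \<ge> 2 * (\<Sum>v\<in>V. a (c' v)) / n - g"
proof -
  have inner: "(\<Sum>i\<in>I. (if c' v = i then 1 / n else 0) * a i) = a (c' v) / n" for v
  proof (cases "c' v \<in> I")
    case True
    have "(\<Sum>i\<in>I. (if c' v = i then 1 / n else 0) * a i) = (\<Sum>i\<in>I. if c' v = i then a i / n else 0)"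
      by (intro sum.cong refl) auto
    also have "\<dots> = a (c' v) / n" using True by (simp add: sum.delta)
    finally show ?thesis .
  next
    case False
    then have "(\<Sum>i\<in>I. (if c' v = i then 1 / n else 0) * a i) = 0" by (intro sum.neutral) auto
    then show ?thesis using False a_zero by simp
  qed
  have "(\<Sum>i\<in>I. alpha V c' i * a i) = (\<Sum>i\<in>I. \<Sum>v\<in>V. (if c' v = i then 1 / n else 0) * a i)"
    by (simp add: alpha_sum[OF fV] sum_distrib_right)
  also have "\<dots> = (\<Sum>v\<in>V. \<Sum>i\<in>I. (if c' v = i then 1 / n else 0) * a i)" by (rule sum.swap)
  also have "\<dots> = (\<Sum>v\<in>V. a (c' v)) / n" by (simp only: inner sum_divide_distrib)
  finally have L: "(\<Sum>i\<in>I. alpha V c' i * a i) = (\<Sum>v\<in>V. a (c' v)) / n" .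
  have "(\<Sum>i\<in>I. 2 * (alpha V c' i * a i) - (a i)\<^sup>2) \<le> (\<Sum>i\<in>I. (alpha V c' i)\<^sup>2)"
  proof (rule sum_mono)
    fix i
    have "0 \<le> (alpha V c' i - a i)\<^sup>2" by simp
    then show "2 * (alpha V c' i * a i) - (a i)\<^sup>2 \<le> (alpha V c' i)\<^sup>2"
      by (simp add: power2_diff)
  qed
  then have "2 * (\<Sum>i\<in>I. alpha V c' i * a i) - g \<le> gamma V k c'"
    by (simp add: sum_subtractf sum_distrib_left gamma_def)
  then show ?thesis using L by simp
qed

lemma part3_gen:
  fixes dyn and s :: real
  defines "e \<equiv> \<lambda>v. measure_pmf.expectation (new_opinion dyn V c v) a"
  assumes mean: "g \<le> (\<Sum>v\<in>V. e v) / n"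
    and var: "4 / n\<^sup>2 * (\<Sum>v\<in>V. measure_pmf.expectation (new_opinion dyn V c v) (\<lambda>x. (a x - e v)\<^sup>2)) \<le> s"
  shows "bernstein_one_sided (step dyn V c) (\<lambda>c'. g - gamma V k c') (2 * sqrt g / n) s"
proof -
  define G where "G = (\<lambda>(v::'v) x. - 2 * a x / n)"
  define D where "D = 2 * sqrt g / n"
  let ?p = "new_opinion dyn V c"
  have fp: "\<forall>v\<in>V. finite (set_pmf (?p v))" using fin_new by auto
  note int = integrable_measure_pmf_finite[OF fin_new]
  have EG: "measure_pmf.expectation (?p v) (G v) = - 2 * e v / n" for v
    by (simp add: G_def e_def)
  have Gb: "- D \<le> G v x \<and> G v x \<le> 0" for v x
    using a_le_sqrt[of x] a_nonneg[of x] npos by (auto simp: G_def D_def field_simps)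
  define S where "S = (\<lambda>y. \<Sum>v\<in>V. G v (y v))"
  have B: "bernstein (Pi_pmf V 0 ?p) (\<lambda>y. S y - measure_pmf.expectation (Pi_pmf V 0 ?p) S) D s"
    unfolding S_def
  proof (rule pi_bern[OF fV fp])
    show "\<forall>v\<in>V. \<forall>x\<in>set_pmf (?p v). \<bar>G v x - measure_pmf.expectation (?p v) (G v)\<bar> \<le> D"
    proof (intro ballI)
      fix v x
      have "- D \<le> measure_pmf.expectation (?p v) (G v) \<and> measure_pmf.expectation (?p v) (G v) \<le> 0"
        by (rule expect_bounds[OF fin_new]) (use Gb in auto)
      then show "\<bar>G v x - measure_pmf.expectation (?p v) (G v)\<bar> \<le> D"
        using Gb[of v x] by (auto simp: abs_le_iff)
    qed
    have V1: "measure_pmf.expectation (?p v) (\<lambda>x. (G v x - measure_pmf.expectation (?p v) (G v))\<^sup>2)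
        = 4 / n\<^sup>2 * measure_pmf.expectation (?p v) (\<lambda>x. (a x - e v)\<^sup>2)" for v
    proof -
      have "(\<lambda>x. (G v x - measure_pmf.expectation (?p v) (G v))\<^sup>2) = (\<lambda>x. 4 / n\<^sup>2 * (a x - e v)\<^sup>2)"
        using npos by (auto simp: EG G_def e_def power2_eq_square field_simps)
      then show ?thesis by simp
    qed
    show "(\<Sum>v\<in>V. measure_pmf.expectation (?p v) (\<lambda>x. (G v x - measure_pmf.expectation (?p v) (G v))\<^sup>2)) \<le> s"
      using var by (simp only: V1 sum_distrib_left[symmetric])
  qed
  have ES: "measure_pmf.expectation (Pi_pmf V 0 ?p) S = - 2 * (\<Sum>v\<in>V. e v) / n"
    unfolding S_def by (simp add: exp_sum_Pi[OF fV fp] EG sum_divide_distrib sum_distrib_left)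
  have SG: "S y = - 2 * (\<Sum>v\<in>V. a (y v)) / n" for y
    by (simp add: S_def G_def sum_divide_distrib sum_distrib_left)
  have pt: "g - gamma V k y \<le> S y - measure_pmf.expectation (Pi_pmf V 0 ?p) S" for y
  proof -
    have "2 * g \<le> 2 * (\<Sum>v\<in>V. e v) / n" using mean by simp
    then show ?thesis using tangent[of y] by (simp add: ES SG)
  qed
  show ?thesis
    unfolding bernstein_one_sided_def
  proof (intro allI impI)
    fix l :: real assume l0: "0 \<le> l" and l: "l * (2 * sqrt g / n) < 3"
    have "measure_pmf.expectation (step dyn V c) (\<lambda>y. exp (l * (g - gamma V k y)))
        \<le> measure_pmf.expectation (Pi_pmf V 0 ?p) (\<lambda>y. exp (l * (S y - measure_pmf.expectation (Pi_pmf V 0 ?p) S)))"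
      unfolding step_def
      by (intro integral_mono integrable_measure_pmf_finite[OF fin_Pi[OF fV fp]])
         (use pt l0 in \<open>auto intro: mult_left_mono\<close>)
    also have "\<dots> \<le> exp (l\<^sup>2 * s / 2 / (1 - \<bar>l\<bar> * D / 3))"
    proof -
      have "\<bar>l\<bar> * D < 3" using l l0 by (simp add: D_def)
      then show ?thesis using B unfolding bernstein_def by blast
    qed
    finally show "measure_pmf.expectation (step dyn V c) (\<lambda>y. exp (l * (g - gamma V k y)))
        \<le> exp (l\<^sup>2 * s / 2 / (1 - l * (2 * sqrt g / n) / 3))"
      using l0 by (simp add: D_def)
  qed
qed

definition "A3 = (\<Sum>j\<in>I. (a j)^3)"
definition "B4 = (\<Sum>j\<in>I. (a j)^4)"

lemma A3_ge: "g\<^sup>2 \<le> A3"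
proof -
  have "0 \<le> (\<Sum>j\<in>I. a j * (a j - g)\<^sup>2)" by (intro sum_nonneg) (simp add: a_nonneg)
  also have "\<dots> = (\<Sum>j\<in>I. (a j)^3 - 2 * g * (a j)\<^sup>2 + g\<^sup>2 * a j)"
    by (intro sum.cong refl) (simp add: power2_eq_square power3_eq_cube algebra_simps)
  also have "\<dots> = A3 - 2 * g * g + g\<^sup>2 * (\<Sum>j\<in>I. a j)"
    by (simp add: sum.distrib sum_subtractf sum_distrib_left A3_def g_def)
  also have "\<dots> = A3 - g\<^sup>2" by (simp only: sum_a) (simp add: power2_eq_square)
  finally show ?thesis by simp
qed

lemma A3_le: "A3 \<le> sqrt g * g"
proof -
  have "A3 \<le> (\<Sum>j\<in>I. sqrt g * (a j)\<^sup>2)" unfolding A3_def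
  proof (intro sum_mono)
    fix j
    have "a j * (a j)\<^sup>2 \<le> sqrt g * (a j)\<^sup>2" by (intro mult_right_mono a_le_sqrt) simp
    then show "(a j)^3 \<le> sqrt g * (a j)\<^sup>2" by (simp add: power3_eq_cube power2_eq_square mult.assoc)
  qed
  then show ?thesis by (simp only: sum_distrib_left[symmetric] g_def[symmetric])
qed

lemma A3_le_g: "A3 \<le> g"
proof -
  have "A3 \<le> (\<Sum>j\<in>I. (a j)\<^sup>2)" unfolding A3_def
    by (intro sum_mono) (simp add: power3_eq_cube power2_eq_square a_le1 a_nonneg mult_left_le mult_nonneg_nonneg)
  then show ?thesis by (simp add: g_def)
qed

lemma B4_le: "B4 \<le> sqrt g * A3"
proof -
  have "B4 \<le> (\<Sum>j\<in>I. sqrt g * (a j)^3)" unfolding B4_def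
  proof (intro sum_mono)
    fix j
    have "a j * (a j)^3 \<le> sqrt g * (a j)^3" by (intro mult_right_mono a_le_sqrt) (simp add: a_nonneg)
    then show "(a j)^4 \<le> sqrt g * (a j)^3" by (simp add: power3_eq_cube power4_eq_xxxx mult.assoc)
  qed
  then show ?thesis by (simp only: sum_distrib_left[symmetric] A3_def[symmetric])
qed

lemma B4_le_g: "B4 \<le> g\<^sup>2"
proof -
  have "B4 \<le> (\<Sum>j\<in>I. g * (a j)\<^sup>2)" unfolding B4_def
  proof (intro sum_mono)
    fix j
    have "(a j)^4 = (a j)\<^sup>2 * (a j)\<^sup>2" by (simp add: power4_eq_xxxx power2_eq_square)
    also have "\<dots> \<le> g * (a j)\<^sup>2" by (intro mult_right_mono a_sq_le_g) simp
    finally show "(a j)^4 \<le> g * (a j)\<^sup>2" .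
  qed
  then show ?thesis by (simp only: sum_distrib_left[symmetric] g_def[symmetric]) (simp add: power2_eq_square)
qed

lemma sum_ag: "(\<Sum>j\<in>I. a j * a j) = g" by (simp only: g_def power2_eq_square)

lemma powr32: "g powr (3/2) = g * sqrt g"
proof (cases "g = 0")
  case True then show ?thesis by simp
next
  case False
  then have "g > 0" using g_nonneg by simp
  have "g powr (3/2) = g powr (1 + 1/2)" by simp
  also have "\<dots> = g powr 1 * g powr (1/2)" by (simp only: powr_add)
  finally show ?thesis using \<open>g > 0\<close> by (simp add: powr_half_sqrt)
qed

lemma part3_3M: "bernstein_one_sided (step ThreeMajority V c) (\<lambda>c'. g - gamma V k c') (2 * sqrt g / n)
     (4 / n * g powr (3/2))"
proof (rule part3_gen)
  let ?p = "new_opinion ThreeMajority V c"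
  define e where "e = A3 + (1 - g) * g"
  have ev: "measure_pmf.expectation (?p v) a = e" for v
    unfolding E3 sum_ag e_def A3_def by (simp add: power2_eq_square power3_eq_cube mult.assoc)
  show "g \<le> (\<Sum>v\<in>V. measure_pmf.expectation (?p v) a) / n"
    using A3_ge npos by (simp add: ev e_def power2_eq_square left_diff_distrib)
  have e2: "measure_pmf.expectation (?p v) (\<lambda>x. (a x)\<^sup>2) = B4 + (1 - g) * A3" for v
    by (simp add: E3 B4_def A3_def power2_eq_square power3_eq_cube power4_eq_xxxx mult.assoc)
  have vv: "measure_pmf.expectation (?p v) (\<lambda>x. (a x - measure_pmf.expectation (?p v) a)\<^sup>2) = B4 + (1 - g) * A3 - e\<^sup>2" for v
  proof -
    have "measure_pmf.expectation (?p v) (\<lambda>x. (a x - measure_pmf.expectation (?p v) a)\<^sup>2)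
       = measure_pmf.expectation (?p v) (\<lambda>x. (a x)\<^sup>2) - (measure_pmf.expectation (?p v) a)\<^sup>2"
      by (rule var_eq[OF fin_new])
    then show ?thesis by (simp add: e2 ev)
  qed
  define r where "r = sqrt g"
  have r: "r * r = g" "0 \<le> r" "r \<le> 1" using g_nonneg g_le1 by (auto simp: r_def)
  have key: "B4 + (1 - g) * A3 - e\<^sup>2 \<le> g * r"
  proof -
    have "e \<ge> g" using A3_ge by (simp add: e_def power2_eq_square algebra_simps)
    then have "e\<^sup>2 \<ge> g\<^sup>2" using g_nonneg by (simp add: power_mono)
    moreover have "B4 + (1 - g) * A3 \<le> A3 * (r + 1 - g)"
      using B4_le by (simp add: r_def algebra_simps)
    moreover have "A3 * (r + 1 - g) \<le> r * g * (r + 1 - g)"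
    proof -
      have "0 \<le> r + 1 - g" using r g_le1 by linarith
      then show ?thesis using A3_le by (intro mult_right_mono) (auto simp: r_def mult.commute)
    qed
    moreover have "r * g * (r + 1 - g) = g * g + g * r * (1 - g)" using r by (simp add: algebra_simps)
    moreover have "g * r * (1 - g) \<le> g * r"
      using r g_nonneg g_le1 by (simp add: mult_left_le mult_nonneg_nonneg)
    ultimately show ?thesis by (simp add: power2_eq_square)
  qed
  have "4 / n\<^sup>2 * (\<Sum>v\<in>V. measure_pmf.expectation (?p v) (\<lambda>x. (a x - measure_pmf.expectation (?p v) a)\<^sup>2))
     = 4 / n * (B4 + (1 - g) * A3 - e\<^sup>2)"
    using npos by (simp only: vv sum_constant) (simp add: power2_eq_square)
  also have "\<dots> \<le> 4 / n * g powr (3/2)"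
    using key npos unfolding powr32 r_def by (intro mult_left_mono) auto
  finally show "4 / n\<^sup>2 * (\<Sum>v\<in>V. measure_pmf.expectation (?p v) (\<lambda>x. (a x - measure_pmf.expectation (?p v) a)\<^sup>2))
     \<le> 4 / n * g powr (3/2)" .
qed

lemma part3_2C: "bernstein_one_sided (step TwoChoices V c) (\<lambda>c'. g - gamma V k c') (2 * sqrt g / n)
     (8 / n * g\<^sup>2)"
proof (rule part3_gen)
  let ?p = "new_opinion TwoChoices V c"
  have ev: "measure_pmf.expectation (?p v) a = A3 + (1 - g) * a (c v)" if v: "v \<in> V" for v
    unfolding E2[OF v] A3_def by (simp add: power2_eq_square power3_eq_cube mult.assoc)
  have sac: "(\<Sum>v\<in>V. a (c v)) = n * g" by (simp only: sum_opinion_a sum_ag)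
  have "(\<Sum>v\<in>V. measure_pmf.expectation (?p v) a) = (\<Sum>v\<in>V. A3 + (1 - g) * a (c v))"
    by (intro sum.cong refl) (rule ev)
  also have "\<dots> = n * (A3 + (1 - g) * g)"
    by (simp only: sum.distrib sum_distrib_left[symmetric] sac sum_constant) (simp add: algebra_simps)
  finally have se: "(\<Sum>v\<in>V. measure_pmf.expectation (?p v) a) = n * (A3 + (1 - g) * g)" .
  show "g \<le> (\<Sum>v\<in>V. measure_pmf.expectation (?p v) a) / n"
    using A3_ge npos by (simp add: se power2_eq_square left_diff_distrib)
  define F where "F = (\<lambda>l. \<Sum>j\<in>I. (a j)\<^sup>2 * (a j - a l)\<^sup>2)"
  have "(\<Sum>v\<in>V. measure_pmf.expectation (?p v) (\<lambda>x. (a x - measure_pmf.expectation (?p v) a)\<^sup>2))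
      \<le> (\<Sum>v\<in>V. measure_pmf.expectation (?p v) (\<lambda>x. (a x - a (c v))\<^sup>2))"
    by (intro sum_mono var_le[OF fin_new])
  also have "\<dots> = (\<Sum>v\<in>V. F (c v))"
    by (intro sum.cong refl) (simp add: E2 F_def)
  also have "\<dots> = n * (\<Sum>l\<in>I. a l * F l)" by (rule sum_opinion_a)
  also have "\<dots> \<le> n * (\<Sum>l\<in>I. a l * (B4 + (a l)\<^sup>2 * g))"
  proof (rule mult_left_mono)
    show "(\<Sum>l\<in>I. a l * F l) \<le> (\<Sum>l\<in>I. a l * (B4 + (a l)\<^sup>2 * g))"
    proof (rule sum_mono)
    fix l
    have "F l \<le> (\<Sum>j\<in>I. (a j)\<^sup>2 * ((a j)\<^sup>2 + (a l)\<^sup>2))" unfolding F_def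
    proof (intro sum_mono mult_left_mono)
      fix j
      have "0 \<le> a j * a l" by (simp add: a_nonneg)
      then show "(a j - a l)\<^sup>2 \<le> (a j)\<^sup>2 + (a l)\<^sup>2" by (simp add: power2_diff)
    qed simp
    also have "\<dots> = B4 + (a l)\<^sup>2 * g"
      by (simp add: distrib_left sum.distrib B4_def g_def sum_distrib_left power4_eq_xxxx power2_eq_square mult.commute mult.left_commute)
    finally have "F l \<le> B4 + (a l)\<^sup>2 * g" .
    then show "a l * F l \<le> a l * (B4 + (a l)\<^sup>2 * g)" using a_nonneg[of l] by (simp add: mult_left_mono)
    qed
  qed (use npos in simp)
  also have "(\<Sum>l\<in>I. a l * (B4 + (a l)\<^sup>2 * g)) = B4 * (\<Sum>l\<in>I. a l) + g * A3"
    by (simp add: distrib_left sum.distrib sum_distrib_left sum_distrib_right A3_def power2_eq_square power3_eq_cube mult.commute mult.left_commute)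
  also have "\<dots> = B4 + g * A3" by (simp only: sum_a mult_1_right)
  finally have le1: "(\<Sum>v\<in>V. measure_pmf.expectation (?p v) (\<lambda>x. (a x - measure_pmf.expectation (?p v) a)\<^sup>2))
      \<le> n * (B4 + g * A3)" .
  have "B4 + g * A3 \<le> 2 * g\<^sup>2"
    using B4_le_g mult_left_mono[OF A3_le_g g_nonneg] by (simp add: power2_eq_square)
  then have "4 / n * (B4 + g * A3) \<le> 4 / n * (2 * g\<^sup>2)"
    by (intro mult_left_mono) (use npos in auto)
  moreover have "4 / n\<^sup>2 * (n * (B4 + g * A3)) = 4 / n * (B4 + g * A3)"
    using npos by (simp add: power2_eq_square)
  ultimately have "4 / n\<^sup>2 * (n * (B4 + g * A3)) \<le> 8 / n * g\<^sup>2" by simp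
  then show "4 / n\<^sup>2 * (\<Sum>v\<in>V. measure_pmf.expectation (?p v) (\<lambda>x. (a x - measure_pmf.expectation (?p v) a)\<^sup>2))
     \<le> 8 / n * g\<^sup>2"
    using le1 npos by (smt (verit) mult_left_mono zero_le_divide_iff zero_le_power2 zero_le_numeral)
qed

end
theorem lemma4p2:
  fixes V :: "'v set" and k :: nat and c :: "'v \<Rightarrow> nat" and dyn :: dynamics
  assumes "finite V" and "V \<noteq> {}"
    and "1 \<le> k" and "k \<le> card V"
    and "\<forall>v\<in>V. c v \<in> {1..k}"
  defines "n \<equiv> real (card V)"
  defines "M \<equiv> step dyn V c"
  shows
    "(\<forall>i\<in>{1..k}.
        bernstein M (\<lambda>c'. alpha V c' i - measure_pmf.expectation M (\<lambda>c''. alpha V c'' i))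
          (1 / n)
          (case dyn of ThreeMajority \<Rightarrow> alpha V c i / n
                     | TwoChoices \<Rightarrow> alpha V c i * (alpha V c i + gamma V k c) / n))
   \<and> (\<forall>i\<in>{1..k}. \<forall>j\<in>{1..k}. i \<noteq> j \<longrightarrow>
        bernstein M (\<lambda>c'. delta V c' i j - measure_pmf.expectation M (\<lambda>c''. delta V c'' i j))
          (2 / n)
          (case dyn of ThreeMajority \<Rightarrow> 2 / n * (alpha V c i + alpha V c j)
                     | TwoChoices \<Rightarrow> 1 / n * (alpha V c i + alpha V c j)
                                      * (alpha V c i + alpha V c j + gamma V k c)))
   \<and> bernstein_one_sided M (\<lambda>c'. gamma V k c - gamma V k c')
          (2 * sqrt (gamma V k c) / n)
          (case dyn of ThreeMajority \<Rightarrow> 4 / n * gamma V k c powr (3/2)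
                     | TwoChoices \<Rightarrow> 8 / n * (gamma V k c)\<^sup>2)"
  proof -
  interpret L: setting V c k using assms(1,2,5) by unfold_locales auto
  show ?thesis
  proof (cases dyn)
    case ThreeMajority
    show ?thesis unfolding M_def n_def ThreeMajority dynamics.case
      by (intro conjI ballI impI L.part1_3M L.part2_3M L.part3_3M) auto
  next
    case TwoChoices
    show ?thesis unfolding M_def n_def TwoChoices dynamics.case
      by (intro conjI ballI impI L.part1_2C L.part2_2C L.part3_2C) auto
  qed
qed

end
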